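(* In the standing setup, let $T$ be a valid partial table and let $T(i,b)=\emptyset$. Then either there exists a valid partial table $T'$ with strictly more nonempty positions than $T$, or there are at least $(n-|S_i|)(n-|C_b|)$ positions that are $(i,b)$-removable.
   Context: Standing setup: $M$ is a matroid of rank $n$ on ground set $E$; $f\le n$ is a positive integer; for each $i\in\{1,\dots,f\}$ and $j\in\{1,\dots,n\}$, $B_{i,j}$ is a basis of $M$, and the sets $B_{i,j}$ are pairwise disjoint. A valid partial table $T$ assigns to each position $(i,j)\in[f]\times[n]$ either the symbol $\emptyset$ (the position is empty) or an element $T(i,j)\in B_{i,j}$, such that for every row $i$ the set $S_i=\{T(i,j):T(i,j)\ne\emptyset\}$ is independent and for every column $j$ the set $C_j=\{T(i,j):T(i,j)\neq\emptyset\}$ is independent. Notation: for a set $A$ and an element $z$, "$A+z$ is independent" means $z\notin A$ and $A\cup\{z\}$ is independent; $A-z$ denotes $A\setminus\{z\}$ for $z\in A$; expressions such as $A-z+w$ are read left to right with the same convention. Definitions (with $T(i,b)=\emptyset$): an element $x\in B_{i,c}$ is $(i,b)$-addable if either (1) $T(i,c)=\emptyset$ and both $S_i+x$ and $C_c+x$ are independent, or (2) $T(i,c)=x'\neq\emptyset$ and there is $y\in B_{i,b}$ such that $C_b+y$ and $S_i-x'+y+x$ are independent. A position $(j,c)$ with $T(j,c)=y'\neq\emptyset$ is $(i,b)$-removable if there is an $(i,b)$-addable element $x\in B_{i,c}$ such that $C_c-y'+x$ is independent. *)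

theory Defs
  imports Main
begin

definition matroid :: "'a set \<Rightarrow> ('a set \<Rightarrow> bool) \<Rightarrow> bool" where
  "matroid E indep \<longleftrightarrow>
     finite E \<and> indep {} \<and>
     (\<forall>A. indep A \<longrightarrow> A \<subseteq> E) \<and>
     (\<forall>A B. indep B \<and> A \<subseteq> B \<longrightarrow> indep A) \<and>
     (\<forall>A B. indep A \<and> indep B \<and> card A < card B \<longrightarrow>
        (\<exists>x \<in> B - A. indep (insert x A)))"

definition basis :: "'a set \<Rightarrow> ('a set \<Rightarrow> bool) \<Rightarrow> 'a set \<Rightarrow> bool" where
  "basis E indep B \<longleftrightarrow> B \<subseteq> E \<and> indep B \<and> (\<forall>C. C \<subseteq> E \<and> indep C \<and> B \<subseteq> C \<longrightarrow> C = B)"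

definition matroid_rank_is :: "'a set \<Rightarrow> ('a set \<Rightarrow> bool) \<Rightarrow> nat \<Rightarrow> bool" where
  "matroid_rank_is E indep n \<longleftrightarrow> (\<exists>B. basis E indep B \<and> card B = n)"

definition indep_add :: "('a set \<Rightarrow> bool) \<Rightarrow> 'a set \<Rightarrow> 'a \<Rightarrow> bool" where
  "indep_add indep A z \<longleftrightarrow> z \<notin> A \<and> indep (insert z A)"

(* Tables: positions (i,j) with i \<in> {1..f}, j \<in> {1..n}; None = empty. *)
definition row_set :: "nat \<Rightarrow> (nat \<Rightarrow> nat \<Rightarrow> 'a option) \<Rightarrow> nat \<Rightarrow> 'a set" where
  "row_set n T i = {x. \<exists>j \<in> {1..n}. T i j = Some x}"

definition col_set :: "nat \<Rightarrow> (nat \<Rightarrow> nat \<Rightarrow> 'a option) \<Rightarrow> nat \<Rightarrow> 'a set" where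
  "col_set f T j = {x. \<exists>i \<in> {1..f}. T i j = Some x}"

definition valid_table ::
  "('a set \<Rightarrow> bool) \<Rightarrow> nat \<Rightarrow> nat \<Rightarrow> (nat \<Rightarrow> nat \<Rightarrow> 'a set) \<Rightarrow> (nat \<Rightarrow> nat \<Rightarrow> 'a option) \<Rightarrow> bool" where
  "valid_table indep f n B T \<longleftrightarrow>
     (\<forall>i \<in> {1..f}. \<forall>j \<in> {1..n}. \<forall>x. T i j = Some x \<longrightarrow> x \<in> B i j) \<and>
     (\<forall>i \<in> {1..f}. indep (row_set n T i)) \<and>
     (\<forall>j \<in> {1..n}. indep (col_set f T j))"

definition num_nonempty :: "nat \<Rightarrow> nat \<Rightarrow> (nat \<Rightarrow> nat \<Rightarrow> 'a option) \<Rightarrow> nat" where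
  "num_nonempty f n T = card {(i, j). i \<in> {1..f} \<and> j \<in> {1..n} \<and> T i j \<noteq> None}"

definition addable ::
  "('a set \<Rightarrow> bool) \<Rightarrow> nat \<Rightarrow> nat \<Rightarrow> (nat \<Rightarrow> nat \<Rightarrow> 'a set) \<Rightarrow> (nat \<Rightarrow> nat \<Rightarrow> 'a option)
     \<Rightarrow> nat \<Rightarrow> nat \<Rightarrow> nat \<Rightarrow> 'a \<Rightarrow> bool" where
  "addable indep f n B T i b c x \<longleftrightarrow>
     x \<in> B i c \<and>
     ((T i c = None \<and> indep_add indep (row_set n T i) x \<and> indep_add indep (col_set f T c) x) \<or>
      (\<exists>x'. T i c = Some x' \<and>
         (\<exists>y \<in> B i b. indep_add indep (col_set f T b) y \<and>
            y \<notin> row_set n T i - {x'} \<and>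
            indep_add indep (insert y (row_set n T i - {x'})) x)))"

definition removable ::
  "('a set \<Rightarrow> bool) \<Rightarrow> nat \<Rightarrow> nat \<Rightarrow> (nat \<Rightarrow> nat \<Rightarrow> 'a set) \<Rightarrow> (nat \<Rightarrow> nat \<Rightarrow> 'a option)
     \<Rightarrow> nat \<Rightarrow> nat \<Rightarrow> nat \<Rightarrow> nat \<Rightarrow> bool" where
  "removable indep f n B T i b j c \<longleftrightarrow>
     (\<exists>y'. T j c = Some y' \<and>
        (\<exists>x \<in> B i c. addable indep f n B T i b c x \<and>
           indep_add indep (col_set f T c - {y'}) x))"

end

theory Submission
  imports Defs
begin

lemma m_fin: assumes "matroid E indep" "indep A" shows "finite A"
proof -
  have "finite E" "A \<subseteq> E" using assms unfolding matroid_def by auto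
  thus ?thesis using finite_subset by blast
qed
lemma m_sub: assumes "matroid E indep" "indep B" "A \<subseteq> B" shows "indep A"
proof -
  have "\<forall>A B. indep B \<and> A \<subseteq> B \<longrightarrow> indep A" using assms(1) unfolding matroid_def by simp
  thus ?thesis using assms by blast
qed
lemma m_aug: assumes "matroid E indep" "indep A" "indep B" "card A < card B" shows "\<exists>x\<in>B-A. indep (insert x A)"
proof -
  have "\<forall>A B. indep A \<and> indep B \<and> card A < card B \<longrightarrow>
        (\<exists>x \<in> B - A. indep (insert x A))" using assms(1) unfolding matroid_def by simp
  thus ?thesis using assms by blast
qed
lemma m_E: assumes "matroid E indep" "indep A" shows "A \<subseteq> E"
proof -
  have "\<forall>A. indep A \<longrightarrow> A \<subseteq> E" using assms(1) unfolding matroid_def by simp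
  thus ?thesis using assms by blast
qed

lemma aug_to_aux:
  assumes M: "matroid E indep" and J: "indep J"
  shows "\<forall>I. indep I \<longrightarrow> card I \<le> card J \<longrightarrow> card J - card I = k \<longrightarrow> (\<exists>K\<subseteq>J. indep (I \<union> K) \<and> card (I \<union> K) = card J)"
proof (induction k)
  case 0
  show ?case by (intro allI impI, rule exI[of _ "{}"], simp)
next
  case (Suc k)
  show ?case
  proof (intro allI impI)
    fix I assume I: "indep I" "card I \<le> card J" "card J - card I = Suc k"
    then have "card I < card J" by simp
    then obtain x where x: "x \<in> J - I" "indep (insert x I)" using m_aug[OF M I(1) J] by blast
    have fI: "finite I" using m_fin[OF M I(1)] .
    have c: "card (insert x I) = Suc (card I)" using x fI by simp
    have "card (insert x I) \<le> card J" "card J - card (insert x I) = k" using c I by auto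
    then obtain K where K: "K \<subseteq> J" "indep (insert x I \<union> K)" "card (insert x I \<union> K) = card J"
      using Suc.IH x(2) by blast
    show "\<exists>K\<subseteq>J. indep (I \<union> K) \<and> card (I \<union> K) = card J"
      by (rule exI[of _ "insert x K"]) (use K x in auto)
  qed
qed

lemma aug_to: "matroid E indep \<Longrightarrow> indep I \<Longrightarrow> indep J \<Longrightarrow> card I \<le> card J \<Longrightarrow>
   \<exists>K\<subseteq>J. indep (I \<union> K) \<and> card (I \<union> K) = card J"
  using aug_to_aux by blast

lemma L1:
  assumes M: "matroid E indep" and A: "indep A" and X: "indep X" and dis: "X \<inter> A = {}"
    and dep: "\<forall>x\<in>X. \<not> indep (insert x A)"
  shows "card X \<le> card {a\<in>A. \<exists>x\<in>X. indep (insert x (A - {a}))}"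
proof (rule ccontr)
  define D where "D = {a\<in>A. \<exists>x\<in>X. indep (insert x (A - {a}))}"
  assume "\<not> card X \<le> card {a\<in>A. \<exists>x\<in>X. indep (insert x (A - {a}))}"
  hence lt: "card D < card X" unfolding D_def by simp
  have DA: "D \<subseteq> A" unfolding D_def by auto
  have fA: "finite A" using m_fin[OF M A] .
  have iD: "indep D" using m_sub[OF M A DA] .
  obtain x where x: "x \<in> X - D" "indep (insert x D)" using m_aug[OF M iD X lt] by blast
  have xA: "x \<notin> A" using dis x by auto
  have "D \<noteq> A" using dep x by (metis DiffD1)
  hence "D \<subset> A" using DA by auto
  hence cD: "card D < card A" using fA psubset_card_mono by blast
  have fD: "finite D" using fA DA finite_subset by blast
  have "x \<notin> D" using xA DA by blast
  hence "card (insert x D) \<le> card A" using cD fD by simp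
  then obtain K where K: "K \<subseteq> A" "indep (insert x D \<union> K)" "card (insert x D \<union> K) = card A"
    using aug_to[OF M x(2) A] by blast
  have fI: "finite (insert x D \<union> K)" using m_fin[OF M K(2)] .
  have "\<exists>k\<in>A - D. k \<notin> K"
  proof (rule ccontr)
    assume "\<not> (\<exists>k\<in>A - D. k \<notin> K)"
    hence "insert x A \<subseteq> insert x D \<union> K" by auto
    hence "card (insert x A) \<le> card (insert x D \<union> K)" by (rule card_mono[OF fI])
    moreover have "card (insert x A) = Suc (card A)" using xA fA by simp
    ultimately show False using K(3) by simp
  qed
  then obtain k where k: "k \<in> A" "k \<notin> D" "k \<notin> K" by blast
  have sub: "insert x D \<union> K \<subseteq> insert x (A - {k})" using k K DA by auto
  have "card (insert x (A - {k})) = card A" using fA k xA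
    by (metis card_Suc_Diff1 card_insert_disjoint finite_Diff DiffD1)
  hence "insert x D \<union> K = insert x (A - {k})"
    using card_subset_eq[OF _ sub] fA K(3) by (metis finite_Diff finite_insert)
  hence "indep (insert x (A - {k}))" using K(2) by simp
  hence "k \<in> D" unfolding D_def using k(1) x(1) by blast
  thus False using k by simp
qed
lemma L2:
  assumes M: "matroid E indep" and A: "indep A" and Z: "indep Z"
    and nz: "\<forall>z\<in>Z. \<not> indep_add indep A z"
  shows "card Z \<le> card A"
proof (rule ccontr)
  assume "\<not> card Z \<le> card A"
  hence "card A < card Z" by simp
  then obtain z where z: "z \<in> Z - A" "indep (insert z A)" using m_aug[OF M A Z] by blast
  hence "indep_add indep A z" unfolding indep_add_def by blast
  thus False using nz z(1) by blast
qed

lemma count_lb: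
  assumes M: "matroid E indep" and A: "indep A" and Bs: "indep Bs" and cB: "card Bs = n"
  shows "n - card A \<le> card {x\<in>Bs. indep_add indep A x}"
proof -
  define Z where "Z = {x\<in>Bs. \<not> indep_add indep A x}"
  define Y where "Y = {x\<in>Bs. indep_add indep A x}"
  have "Z \<subseteq> Bs" unfolding Z_def by blast
  hence iZ: "indep Z" by (rule m_sub[OF M Bs])
  have "\<forall>z\<in>Z. \<not> indep_add indep A z" unfolding Z_def by blast
  hence cZ: "card Z \<le> card A" using L2[OF M A iZ] by blast
  have fB: "finite Bs" using m_fin[OF M Bs] .
  have fY: "finite Y" "finite Z" using fB unfolding Y_def Z_def by auto
  have "Bs = Y \<union> Z" unfolding Y_def Z_def by blast
  moreover have "Y \<inter> Z = {}" unfolding Y_def Z_def by blast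
  ultimately have "card Bs = card Y + card Z"
    using card_Un_disjoint[OF fY] by simp
  thus ?thesis using cB cZ unfolding Y_def[symmetric] by linarith
qed

lemma basis_card:
  assumes M: "matroid E indep" and B1: "basis E indep B1" and B2: "basis E indep B2"
  shows "card B1 = card B2"
proof -
  have *: "\<not> card X < card Y" if X: "basis E indep X" and Y: "basis E indep Y" for X Y
  proof
    assume lt: "card X < card Y"
    have iX: "indep X" and mX: "\<forall>C. C \<subseteq> E \<and> indep C \<and> X \<subseteq> C \<longrightarrow> C = X"
      using X unfolding basis_def by auto
    have iY: "indep Y" using Y unfolding basis_def by auto
    obtain x where x: "x \<in> Y - X" "indep (insert x X)"
      using m_aug[OF M iX iY lt] by blast
    have "insert x X \<subseteq> E" using m_E[OF M x(2)] .
    hence "insert x X = X" using mX x(2) by blast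
    thus False using x(1) by blast
  qed
  show ?thesis using *[OF B1 B2] *[OF B2 B1] by simp
qed


lemma num_lt:
  fixes T T' :: "nat \<Rightarrow> nat \<Rightarrow> 'a option"
  assumes "\<forall>j d. T j d \<noteq> None \<longrightarrow> T' j d \<noteq> None" "T i b = None" "T' i b \<noteq> None"
    "i \<in> {1..f}" "b \<in> {1..n}"
  shows "num_nonempty f n T < num_nonempty f n T'"
proof -
  let ?P = "\<lambda>T::nat \<Rightarrow> nat \<Rightarrow> 'a option. {(j, d). j \<in> {1..f} \<and> d \<in> {1..n} \<and> T j d \<noteq> None}"
  have fin: "finite (?P T')" by (rule finite_subset[of _ "{1..f} \<times> {1..n}"]) auto
  have sub: "?P T \<subseteq> ?P T'" using assms(1) by auto
  have "(i,b) \<in> ?P T' - ?P T" using assms(2-5) by auto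
  hence "?P T \<subset> ?P T'" using sub by blast
  thus ?thesis unfolding num_nonempty_def by (rule psubset_card_mono[OF fin])
qed

locale tbl =
  fixes E :: "'a set" and indep :: "'a set \<Rightarrow> bool"
    and n f :: nat and B :: "nat \<Rightarrow> nat \<Rightarrow> 'a set"
    and T :: "nat \<Rightarrow> nat \<Rightarrow> 'a option" and i b :: nat
  assumes M: "matroid E indep"
    and rk: "matroid_rank_is E indep n"
    and bases: "\<forall>i' \<in> {1..f}. \<forall>j \<in> {1..n}. basis E indep (B i' j)"
    and disj: "\<forall>i1 \<in> {1..f}. \<forall>j1 \<in> {1..n}. \<forall>i2 \<in> {1..f}. \<forall>j2 \<in> {1..n}.
                 (i1, j1) \<noteq> (i2, j2) \<longrightarrow> B i1 j1 \<inter> B i2 j2 = {}"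
    and valid: "valid_table indep f n B T"
    and i: "i \<in> {1..f}" and b: "b \<in> {1..n}"
    and empty: "T i b = None"
begin

lemma entry: "j \<in> {1..f} \<Longrightarrow> d \<in> {1..n} \<Longrightarrow> T j d = Some z \<Longrightarrow> z \<in> B j d"
  using valid unfolding valid_table_def by blast

lemma disjD: "x \<in> B i1 j1 \<Longrightarrow> x \<in> B i2 j2 \<Longrightarrow> i1 \<in> {1..f} \<Longrightarrow> j1 \<in> {1..n} \<Longrightarrow>
   i2 \<in> {1..f} \<Longrightarrow> j2 \<in> {1..n} \<Longrightarrow> i1 = i2 \<and> j1 = j2"
  using disj by blast

lemma rowI: "j \<in> {1..f} \<Longrightarrow> indep (row_set n T j)"
  using valid unfolding valid_table_def by blast

lemma colI: "d \<in> {1..n} \<Longrightarrow> indep (col_set f T d)"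
  using valid unfolding valid_table_def by blast

lemma Bind: "j \<in> {1..f} \<Longrightarrow> d \<in> {1..n} \<Longrightarrow> indep (B j d)"
  using bases unfolding basis_def by blast

lemma Bcard: "j \<in> {1..f} \<Longrightarrow> d \<in> {1..n} \<Longrightarrow> card (B j d) = n"
proof -
  assume j: "j \<in> {1..f}" and d: "d \<in> {1..n}"
  obtain B0 where B0: "basis E indep B0" "card B0 = n" using rk unfolding matroid_rank_is_def by blast
  have "basis E indep (B j d)" using bases j d by blast
  thus "card (B j d) = n" using basis_card[OF M _ B0(1)] B0(2) by simp
qed


lemma ext1:
  assumes y: "y \<in> B i b" and yC: "indep (insert y (col_set f T b))"
    and yS: "indep (insert y (row_set n T i))"
  shows "\<exists>T'. valid_table indep f n B T' \<and> num_nonempty f n T < num_nonempty f n T'"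
proof -
  define T' where "T' = T(i := (T i)(b := Some y))"
  have T'o: "\<And>j d. j \<noteq> i \<Longrightarrow> T' j d = T j d" by (simp add: T'_def)
  have T'b: "T' i b = Some y" by (simp add: T'_def)
  have T'd: "\<And>d. d \<noteq> b \<Longrightarrow> T' i d = T i d" by (simp add: T'_def)
  have E: "\<forall>j\<in>{1..f}. \<forall>d\<in>{1..n}. \<forall>z. T' j d = Some z \<longrightarrow> z \<in> B j d"
  proof (intro ballI allI impI)
    fix j d z assume j: "j\<in>{1..f}" and d: "d\<in>{1..n}" and z: "T' j d = Some z"
    show "z \<in> B j d"
    proof (cases "j = i")
      case False thus ?thesis using entry[OF j d] z T'o by simp
    next
      case True
      show ?thesis
      proof (cases "d = b")
        case True thus ?thesis using \<open>j = i\<close> z T'b y by simp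
      next
        case False thus ?thesis using \<open>j = i\<close> z T'd[OF False] entry[OF i d] by simp
      qed
    qed
  qed
  have R: "\<forall>j\<in>{1..f}. indep (row_set n T' j)"
  proof
    fix j assume j: "j\<in>{1..f}"
    show "indep (row_set n T' j)"
    proof (cases "j = i")
      case False
      hence "row_set n T' j = row_set n T j" unfolding row_set_def using T'o by simp
      thus ?thesis using rowI[OF j] by simp
    next
      case True
      have "row_set n T' i \<subseteq> insert y (row_set n T i)"
      proof
        fix z assume "z \<in> row_set n T' i"
        then obtain d where d: "d \<in> {1..n}" "T' i d = Some z" unfolding row_set_def by blast
        show "z \<in> insert y (row_set n T i)"
        proof (cases "d = b")
          case True thus ?thesis using d T'b by auto
        next
          case False
          hence Tz: "T i d = Some z" using d T'd by simp
          thus ?thesis unfolding row_set_def using d(1) by blast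
        qed
      qed
      thus ?thesis using True m_sub[OF M yS] by simp
    qed
  qed
  have Cl: "\<forall>d\<in>{1..n}. indep (col_set f T' d)"
  proof
    fix d assume d: "d \<in> {1..n}"
    show "indep (col_set f T' d)"
    proof (cases "d = b")
      case True
      have "col_set f T' b \<subseteq> insert y (col_set f T b)"
      proof
        fix z assume "z \<in> col_set f T' b"
        then obtain j where j: "j \<in> {1..f}" "T' j b = Some z" unfolding col_set_def by blast
        show "z \<in> insert y (col_set f T b)"
        proof (cases "j = i")
          case True thus ?thesis using j T'b by simp
        next
          case False thus ?thesis using j T'o unfolding col_set_def by auto
        qed
      qed
      thus ?thesis using True m_sub[OF M yC] by simp
    next
      case False
      hence "\<forall>j. T' j d = T j d" using T'o T'd by metis
      hence "col_set f T' d = col_set f T d" unfolding col_set_def by simp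
      thus ?thesis using colI[OF d] by simp
    qed
  qed
  have V: "valid_table indep f n B T'" unfolding valid_table_def using E R Cl by blast
  have "\<forall>j d. T j d \<noteq> None \<longrightarrow> T' j d \<noteq> None" by (simp add: T'_def)
  hence "num_nonempty f n T < num_nonempty f n T'"
    using num_lt[of T T' i b f n] empty T'b i b by simp
  thus ?thesis using V by blast
qed

lemma ext2:
  assumes c: "c \<in> {1..n}" and Tc: "T i c = Some a" and y: "y \<in> B i b"
    and yC: "indep (insert y (col_set f T b))"
    and x: "x \<in> B i c" and xr: "indep (insert x (insert y (row_set n T i - {a})))"
    and xc: "indep (insert x (col_set f T c - {a}))"
  shows "\<exists>T'. valid_table indep f n B T' \<and> num_nonempty f n T < num_nonempty f n T'"
proof -
  have cb: "c \<noteq> b" using Tc empty by auto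
  define T' where "T' = T(i := (T i)(b := Some y, c := Some x))"
  have T'o: "\<And>j d. j \<noteq> i \<Longrightarrow> T' j d = T j d" by (simp add: T'_def)
  have T'b: "T' i b = Some y" using cb by (simp add: T'_def)
  have T'c: "T' i c = Some x" by (simp add: T'_def)
  have T'd: "\<And>d. d \<noteq> b \<Longrightarrow> d \<noteq> c \<Longrightarrow> T' i d = T i d" by (simp add: T'_def)
  have ai: "a \<in> B i c" using entry[OF i c Tc] .
  have E: "\<forall>j\<in>{1..f}. \<forall>d\<in>{1..n}. \<forall>z. T' j d = Some z \<longrightarrow> z \<in> B j d"
  proof (intro ballI allI impI)
    fix j d z assume j: "j\<in>{1..f}" and d: "d\<in>{1..n}" and z: "T' j d = Some z"
    show "z \<in> B j d"
    proof (cases "j = i")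
      case False thus ?thesis using entry[OF j d] z T'o by simp
    next
      case True
      show ?thesis
      proof (cases "d = b")
        case True thus ?thesis using \<open>j = i\<close> z T'b y by simp
      next
        case nb: False
        show ?thesis
        proof (cases "d = c")
          case True thus ?thesis using \<open>j = i\<close> z T'c x by simp
        next
          case False thus ?thesis using \<open>j = i\<close> z T'd[OF nb False] entry[OF i d] by simp
        qed
      qed
    qed
  qed
  have R: "\<forall>j\<in>{1..f}. indep (row_set n T' j)"
  proof
    fix j assume j: "j\<in>{1..f}"
    show "indep (row_set n T' j)"
    proof (cases "j = i")
      case False
      hence "row_set n T' j = row_set n T j" unfolding row_set_def using T'o by simp
      thus ?thesis using rowI[OF j] by simp
    next
      case True
      have "row_set n T' i \<subseteq> insert x (insert y (row_set n T i - {a}))"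
      proof
        fix z assume "z \<in> row_set n T' i"
        then obtain d where d: "d \<in> {1..n}" "T' i d = Some z" unfolding row_set_def by blast
        show "z \<in> insert x (insert y (row_set n T i - {a}))"
        proof (cases "d = b \<or> d = c")
          case True thus ?thesis using d T'b T'c by auto
        next
          case False
          hence Tz: "T i d = Some z" using d T'd by simp
          have "z \<noteq> a"
          proof
            assume "z = a"
            hence "a \<in> B i d" using entry[OF i d(1) Tz] by simp
            hence "d = c" using disjD[OF _ ai i d(1) i c] by blast
            thus False using False by simp
          qed
          moreover have "z \<in> row_set n T i" unfolding row_set_def using d(1) Tz by blast
          ultimately show ?thesis by blast
        qed
      qed
      thus ?thesis using True m_sub[OF M xr] by simp
    qed
  qed
  have Cl: "\<forall>d\<in>{1..n}. indep (col_set f T' d)"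
  proof
    fix d assume d: "d \<in> {1..n}"
    consider "d = b" | "d = c" | "d \<noteq> b \<and> d \<noteq> c" by blast
    thus "indep (col_set f T' d)"
    proof cases
      case 1
      have "col_set f T' b \<subseteq> insert y (col_set f T b)"
      proof
        fix z assume "z \<in> col_set f T' b"
        then obtain j where j: "j \<in> {1..f}" "T' j b = Some z" unfolding col_set_def by blast
        show "z \<in> insert y (col_set f T b)"
        proof (cases "j = i")
          case True thus ?thesis using j T'b by simp
        next
          case False thus ?thesis using j T'o unfolding col_set_def by auto
        qed
      qed
      thus ?thesis using 1 m_sub[OF M yC] by simp
    next
      case 2
      have "col_set f T' c \<subseteq> insert x (col_set f T c - {a})"
      proof
        fix z assume "z \<in> col_set f T' c"
        then obtain j where j: "j \<in> {1..f}" "T' j c = Some z" unfolding col_set_def by blast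
        show "z \<in> insert x (col_set f T c - {a})"
        proof (cases "j = i")
          case True thus ?thesis using j T'c by simp
        next
          case False
          hence Tz: "T j c = Some z" using j T'o by simp
          have "z \<noteq> a"
          proof
            assume "z = a"
            hence "a \<in> B j c" using entry[OF j(1) c Tz] by simp
            hence "j = i" using disjD[OF _ ai j(1) c i c] by blast
            thus False using False by simp
          qed
          thus ?thesis using Tz j(1) unfolding col_set_def by blast
        qed
      qed
      thus ?thesis using 2 m_sub[OF M xc] by simp
    next
      case 3
      hence "\<forall>j. T' j d = T j d" using T'o T'd by metis
      hence "col_set f T' d = col_set f T d" unfolding col_set_def by simp
      thus ?thesis using colI[OF d] by simp
    qed
  qed
  have V: "valid_table indep f n B T'" unfolding valid_table_def using E R Cl by blast
  have "\<forall>j d. T j d \<noteq> None \<longrightarrow> T' j d \<noteq> None" by (simp add: T'_def)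
  hence "num_nonempty f n T < num_nonempty f n T'"
    using num_lt[of T T' i b f n] empty T'b i b by simp
  thus ?thesis using V by blast
qed

lemma notinS:
  assumes y: "y \<in> B i b" shows "y \<notin> row_set n T i"
proof
  assume "y \<in> row_set n T i"
  then obtain d where d: "d \<in> {1..n}" "T i d = Some y" unfolding row_set_def by blast
  have "y \<in> B i d" using entry[OF i d(1) d(2)] .
  hence "d = b" using disjD[OF _ y i d(1) i b] by blast
  thus False using d(2) empty by simp
qed

lemma column:
  assumes NE: "\<not> (\<exists>T'. valid_table indep f n B T' \<and> num_nonempty f n T' > num_nonempty f n T)"
    and c: "c \<in> {1..n}" and Tc: "T i c = Some a" and y: "y \<in> B i b"
    and yC: "indep_add indep (col_set f T b) y"
    and yS: "indep (insert y (row_set n T i - {a}))"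
    and ndep: "\<not> indep (insert y (row_set n T i))"
  shows "n - card (row_set n T i) \<le> card {j. j \<in> {1..f} \<and> removable indep f n B T i b j c}"
proof -
  define S where "S = row_set n T i"
  define Cc where "Cc = col_set f T c"
  define A where "A = insert y (S - {a})"
  have aS: "a \<in> S" unfolding S_def row_set_def using c Tc by blast
  have ai: "a \<in> B i c" using entry[OF i c Tc] .
  have yS': "y \<notin> S" unfolding S_def by (rule notinS[OF y])
  have fS: "finite S" unfolding S_def using m_fin[OF M rowI[OF i]] .
  have "card A = Suc (card (S - {a}))" unfolding A_def using fS yS' by simp
  hence cA: "card A = card S" using card_Suc_Diff1[OF fS aS] by simp
  have iA: "indep A" unfolding A_def S_def using yS .
  define X where "X = {x \<in> B i c. indep_add indep A x}"
  have cX: "n - card A \<le> card X"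
    using count_lb[OF M iA Bind[OF i c] Bcard[OF i c]] unfolding X_def .
  have insA: "insert a A = insert y S" unfolding A_def using aS by blast
  have xa: "\<forall>x\<in>X. x \<noteq> a"
  proof
    fix x assume "x \<in> X"
    hence "indep (insert x A)" unfolding X_def indep_add_def by blast
    thus "x \<noteq> a" using insA ndep unfolding S_def by auto
  qed
  have yCC: "indep (insert y (col_set f T b))" using yC unfolding indep_add_def by blast
  have nd: "\<forall>x\<in>X. \<not> indep (insert x (Cc - {a}))"
  proof (intro ballI notI)
    fix x assume x: "x \<in> X" and ix: "indep (insert x (Cc - {a}))"
    have xB: "x \<in> B i c" and xr: "indep (insert x A)" using x unfolding X_def indep_add_def by blast+
    have "\<exists>T'. valid_table indep f n B T' \<and> num_nonempty f n T < num_nonempty f n T'"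
      using ext2[OF c Tc y yCC xB] xr ix unfolding A_def S_def Cc_def by blast
    thus False using NE by blast
  qed
  have dis: "X \<inter> Cc = {}"
  proof (rule ccontr)
    assume "X \<inter> Cc \<noteq> {}"
    then obtain x where x: "x \<in> X" "x \<in> Cc" by blast
    then obtain j where j: "j \<in> {1..f}" "T j c = Some x" unfolding Cc_def col_set_def by blast
    have "x \<in> B j c" using entry[OF j(1) c j(2)] .
    moreover have "x \<in> B i c" using x(1) unfolding X_def by blast
    ultimately have "j = i" using disjD[OF _ _ j(1) c i c] by blast
    hence "x = a" using j(2) Tc by simp
    thus False using xa x(1) by blast
  qed
  have iC: "indep Cc" unfolding Cc_def using colI[OF c] .
  have nd2: "\<forall>x\<in>X. \<not> indep (insert x Cc)"
  proof (intro ballI notI)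
    fix x assume x: "x \<in> X" and ix: "indep (insert x Cc)"
    have "insert x (Cc - {a}) \<subseteq> insert x Cc" by blast
    hence "indep (insert x (Cc - {a}))" by (rule m_sub[OF M ix])
    thus False using nd x by blast
  qed
  have "X \<subseteq> B i c" unfolding X_def by blast
  hence iX: "indep X" by (rule m_sub[OF M Bind[OF i c]])
  define D where "D = {z\<in>Cc. \<exists>x\<in>X. indep (insert x (Cc - {z}))}"
  have cD: "card X \<le> card D" unfolding D_def by (rule L1[OF M iC iX dis nd2])
  define rowof where "rowof z = (SOME j. j \<in> {1..f} \<and> T j c = Some z)" for z
  have ro: "rowof z \<in> {1..f} \<and> T (rowof z) c = Some z" if "z \<in> Cc" for z
  proof -
    have "\<exists>j. j \<in> {1..f} \<and> T j c = Some z" using that unfolding Cc_def col_set_def by blast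
    thus ?thesis unfolding rowof_def by (rule someI_ex)
  qed
  have inj: "inj_on rowof D"
  proof
    fix z1 z2 assume z: "z1 \<in> D" "z2 \<in> D" "rowof z1 = rowof z2"
    have "T (rowof z1) c = Some z1" "T (rowof z2) c = Some z2" using ro z(1,2) unfolding D_def by blast+
    thus "z1 = z2" using z(3) by (metis option.inject)
  qed
  define G where "G = {j. j \<in> {1..f} \<and> removable indep f n B T i b j c}"
  have img: "rowof ` D \<subseteq> G"
  proof
    fix j assume "j \<in> rowof ` D"
    then obtain z where z: "z \<in> D" "j = rowof z" by blast
    have zC: "z \<in> Cc" using z(1) unfolding D_def by blast
    obtain x where x: "x \<in> X" "indep (insert x (Cc - {z}))" using z(1) unfolding D_def by blast
    have jr: "j \<in> {1..f}" "T j c = Some z" using ro[OF zC] z(2) by auto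
    have xB: "x \<in> B i c" and xA: "indep_add indep A x" using x(1) unfolding X_def by blast+
    have "y \<notin> S - {a}" using yS' by blast
    hence add: "addable indep f n B T i b c x"
      unfolding addable_def using xB Tc y yC xA unfolding A_def S_def by blast
    have "x \<notin> Cc - {z}" using dis x(1) by blast
    hence "indep_add indep (Cc - {z}) x" unfolding indep_add_def using x(2) by blast
    hence "removable indep f n B T i b j c"
      unfolding removable_def using jr(2) xB add unfolding Cc_def by blast
    thus "j \<in> G" unfolding G_def using jr(1) by blast
  qed
  have fG: "finite G" unfolding G_def by (rule finite_subset[of _ "{1..f}"]) auto
  have "card D \<le> card G" by (rule card_inj_on_le[OF inj img fG])
  thus ?thesis using cX cD cA unfolding G_def S_def by linarith
qed

lemma main_count:
  assumes NE: "\<not> (\<exists>T'. valid_table indep f n B T' \<and> num_nonempty f n T' > num_nonempty f n T)"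
  shows "(n - card (row_set n T i)) * (n - card (col_set f T b))
             \<le> card {(j, c). j \<in> {1..f} \<and> c \<in> {1..n} \<and> removable indep f n B T i b j c}"
proof -
  define S where "S = row_set n T i"
  define C where "C = col_set f T b"
  define Y where "Y = {y \<in> B i b. indep_add indep C y}"
  have iC: "indep C" unfolding C_def using colI[OF b] .
  have iS: "indep S" unfolding S_def using rowI[OF i] .
  have fS: "finite S" using m_fin[OF M iS] .
  have cY: "n - card C \<le> card Y"
    using count_lb[OF M iC Bind[OF i b] Bcard[OF i b]] unfolding Y_def .
  have yS: "\<forall>y\<in>Y. \<not> indep (insert y S)"
  proof (intro ballI notI)
    fix y assume y: "y \<in> Y" and iy: "indep (insert y S)"
    have yB: "y \<in> B i b" and yC: "indep (insert y C)" using y unfolding Y_def indep_add_def by blast+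
    have "\<exists>T'. valid_table indep f n B T' \<and> num_nonempty f n T < num_nonempty f n T'"
      using ext1[OF yB] yC iy unfolding C_def S_def by blast
    thus False using NE by blast
  qed
  have dis: "Y \<inter> S = {}" using notinS unfolding Y_def S_def by blast
  have "Y \<subseteq> B i b" unfolding Y_def by blast
  hence iY: "indep Y" by (rule m_sub[OF M Bind[OF i b]])
  define R where "R = {a\<in>S. \<exists>y\<in>Y. indep (insert y (S - {a}))}"
  have cR: "card Y \<le> card R" unfolding R_def by (rule L1[OF M iS iY dis yS])
  have RS: "R \<subseteq> S" unfolding R_def by blast
  define colof where "colof a = (SOME d. d \<in> {1..n} \<and> T i d = Some a)" for a
  have co: "colof a \<in> {1..n} \<and> T i (colof a) = Some a" if "a \<in> S" for a
  proof -
    have "\<exists>d. d \<in> {1..n} \<and> T i d = Some a" using that unfolding S_def row_set_def by blast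
    thus ?thesis unfolding colof_def by (rule someI_ex)
  qed
  have inj: "inj_on colof R"
  proof
    fix z1 z2 assume z: "z1 \<in> R" "z2 \<in> R" "colof z1 = colof z2"
    have "T i (colof z1) = Some z1" "T i (colof z2) = Some z2" using co z(1,2) RS by blast+
    thus "z1 = z2" using z(3) by (metis option.inject)
  qed
  define G where "G d = {j. j \<in> {1..f} \<and> removable indep f n B T i b j d}" for d
  have Gb: "n - card S \<le> card (G d)" if dR: "d \<in> colof ` R" for d
  proof -
    obtain a where a: "a \<in> R" "d = colof a" using dR by blast
    have aS: "a \<in> S" using a(1) RS by blast
    obtain y where y: "y \<in> Y" "indep (insert y (S - {a}))" using a(1) unfolding R_def by blast
    have yB: "y \<in> B i b" and yC: "indep_add indep C y" using y(1) unfolding Y_def by blast+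
    have d: "d \<in> {1..n}" "T i d = Some a" using co[OF aS] a(2) by auto
    show ?thesis unfolding G_def S_def
      by (rule column[OF NE d yB yC[unfolded C_def] y(2)[unfolded S_def]])
         (use yS y(1) in \<open>auto simp: S_def\<close>)
  qed
  have fR: "finite R" using fS RS finite_subset by blast
  have fG: "finite (G d)" for d unfolding G_def by (rule finite_subset[of _ "{1..f}"]) auto
  have cSig: "card (Sigma (colof ` R) G) = (\<Sum>d\<in>colof ` R. card (G d))"
    using fR fG by simp
  have "of_nat (card (colof ` R)) * (n - card S) \<le> (\<Sum>d\<in>colof ` R. card (G d))"
    by (rule sum_bounded_below) (rule Gb)
  hence s1: "card R * (n - card S) \<le> card (Sigma (colof ` R) G)"
    using cSig card_image[OF inj] by simp
  define RM where "RM = {(j, c). j \<in> {1..f} \<and> c \<in> {1..n} \<and> removable indep f n B T i b j c}"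
  have fRM: "finite RM" unfolding RM_def
    by (rule finite_subset[of _ "{1..f} \<times> {1..n}"]) auto
  have sw: "inj_on (\<lambda>(d, j). (j, d)) (Sigma (colof ` R) G)" by (auto simp: inj_on_def)
  have sub: "(\<lambda>(d, j). (j, d)) ` (Sigma (colof ` R) G) \<subseteq> RM"
  proof
    fix p assume "p \<in> (\<lambda>(d, j). (j, d)) ` (Sigma (colof ` R) G)"
    then obtain q where q: "q \<in> Sigma (colof ` R) G" "p = (\<lambda>(d, j). (j, d)) q" by (rule imageE) simp
    obtain d j where qd: "q = (d, j)" by (cases q)
    have dj: "d \<in> colof ` R" "j \<in> G d" "p = (j, d)" using q qd by auto
    have dn: "d \<in> {1..n}" using dj(1) co RS by blast
    have jr: "j \<in> {1..f}" "removable indep f n B T i b j d" using dj(2) unfolding G_def by blast+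
    show "p \<in> RM" unfolding RM_def using dj(3) dn jr by simp
  qed
  have "card (Sigma (colof ` R) G) \<le> card RM"
    using card_inj_on_le[OF sw sub fRM] .
  hence s2: "card R * (n - card S) \<le> card RM" using s1 by linarith
  have "(n - card S) * (n - card C) \<le> (n - card S) * card R"
    using cY cR by (intro mult_le_mono2) linarith
  hence "(n - card S) * (n - card C) \<le> card RM" using s2 by (metis mult.commute order_trans)
  thus ?thesis unfolding RM_def S_def C_def .
qed

end

theorem mainTheorem6:
  fixes E :: "'a set" and indep :: "'a set \<Rightarrow> bool"
    and n f :: nat and B :: "nat \<Rightarrow> nat \<Rightarrow> 'a set"
    and T :: "nat \<Rightarrow> nat \<Rightarrow> 'a option" and i b :: nat
  assumes M: "matroid E indep"
    and rk: "matroid_rank_is E indep n"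
    and fpos: "0 < f" and fn: "f \<le> n"
    and bases: "\<forall>i' \<in> {1..f}. \<forall>j \<in> {1..n}. basis E indep (B i' j)"
    and disj: "\<forall>i1 \<in> {1..f}. \<forall>j1 \<in> {1..n}. \<forall>i2 \<in> {1..f}. \<forall>j2 \<in> {1..n}.
                 (i1, j1) \<noteq> (i2, j2) \<longrightarrow> B i1 j1 \<inter> B i2 j2 = {}"
    and valid: "valid_table indep f n B T"
    and i: "i \<in> {1..f}" and b: "b \<in> {1..n}"
    and empty: "T i b = None"
  shows "(\<exists>T'. valid_table indep f n B T' \<and> num_nonempty f n T' > num_nonempty f n T)
         \<or> (n - card (row_set n T i)) * (n - card (col_set f T b))
             \<le> card {(j, c). j \<in> {1..f} \<and> c \<in> {1..n} \<and> removable indep f n B T i b j c}"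
proof -
  interpret tbl E indep n f B T i b
    using M rk bases disj valid i b empty by unfold_locales
  show ?thesis using main_count by blast
qed

end
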